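(* $$\pi^3=\frac{81}{4\cdot3^{5/2}}\sum_{n=0}^\infty\frac{(-1)^n}{n!}2^n\left[\gamma_n\!\left(\tfrac13\right)-\gamma_n\!\left(\tfrac23\right)\right]$$ $$=\frac{343}{32\cdot7^{5/2}}\sum_{n=0}^\infty\frac{(-1)^n}{n!}2^n\left[\gamma_n\!\left(\tfrac17\right)+\gamma_n\!\left(\tfrac27\right)-\gamma_n\!\left(\tfrac37\right)+\gamma_n\!\left(\tfrac47\right)-\gamma_n\!\left(\tfrac57\right)-\gamma_n\!\left(\tfrac67\right)\right].$$
   Context: The Stieltjes constants $\gamma_n(a)$ ($\mathrm{Re}\,a>0$) are defined by the Laurent expansion of the Hurwitz zeta function $\zeta(s,a)=\sum_{n\ge0}(n+a)^{-s}$ at $s=1$: $\zeta(s,a)=\frac{1}{s-1}+\sum_{n\ge0}\frac{(-1)^n}{n!}\gamma_n(a)(s-1)^n$. *)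

theory Defs
  imports "HOL-Complex_Analysis.Complex_Analysis"
begin

definition hurwitz_zeta_series :: "real \<Rightarrow> complex \<Rightarrow> complex" where
  "hurwitz_zeta_series a s = (\<Sum>k. complex_of_real (real k + a) powr (- s))"

text \<open>The regular part zeta(s,a) - 1/(s-1): the unique entire function agreeing
  with it on Re s > 1 (analytic continuation; unique by the identity theorem).\<close>
definition hurwitz_zeta_regular :: "real \<Rightarrow> complex \<Rightarrow> complex" where
  "hurwitz_zeta_regular a = (THE g. g holomorphic_on UNIV \<and>
      (\<forall>s. Re s > 1 \<longrightarrow> g s = hurwitz_zeta_series a s - 1 / (s - 1)))"

text \<open>Stieltjes constants via the Laurent expansion at s = 1:
  zeta(s,a) = 1/(s-1) + sum_n (-1)^n/n! gamma_n(a) (s-1)^n, hence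
  gamma_n(a) = (-1)^n times the n-th derivative of the regular part at 1.\<close>
definition stieltjes :: "nat \<Rightarrow> real \<Rightarrow> complex" where
  "stieltjes n a = (-1) ^ n * (deriv ^^ n) (hurwitz_zeta_regular a) 1"

end

theory Submission
  imports Defs
begin
lemma norm_pochhammer_le: "norm (pochhammer (z::complex) n) \<le> pochhammer (norm z) n"
proof -
  have "norm (pochhammer z n) = (\<Prod>i = 0..<n. norm (z + of_nat i))"
    by (simp add: pochhammer_prod prod_norm)
  also have "\<dots> \<le> (\<Prod>i = 0..<n. norm z + of_nat i)"
    by (intro prod_mono) (auto intro: order.trans[OF norm_triangle_ineq])
  finally show ?thesis by (simp add: pochhammer_prod)
qed

lemma pochhammer_mono_real: "0 \<le> x \<Longrightarrow> x \<le> y \<Longrightarrow> pochhammer (x::real) n \<le> pochhammer y n"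
  unfolding pochhammer_prod by (intro prod_mono) auto

lemma norm_gchoose_le: "norm ((w::complex) gchoose k) \<le> pochhammer (norm w) k / fact k"
proof -
  have "norm (w gchoose k) = norm (pochhammer (-w) k) / fact k"
    by (simp add: gbinomial_pochhammer norm_divide norm_mult norm_power)
  also have "\<dots> \<le> pochhammer (norm w) k / fact k"
    using norm_pochhammer_le[of "-w" k] by (intro divide_right_mono) auto
  finally show ?thesis .
qed

lemma summable_poch:
  fixes R r :: real
  assumes "0 \<le> R" "0 \<le> r" "r < 1"
  shows "summable (\<lambda>j. pochhammer R j / fact j * r^j)"
proof -
  have "\<bar>-r\<bar> < 1" using assms by simp
  from gen_binomial_real[OF this, of "-R"]
  have "summable (\<lambda>n. ((-R) gchoose n) * (-r)^n)" by (rule sums_summable)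
  moreover have "((-R) gchoose n) * (-r)^n = pochhammer R n / fact n * r^n" for n
  proof -
    have "((-R) gchoose n) * (-r)^n = ((-1)^n * (-1)^n) * (pochhammer R n / fact n * r^n)"
      unfolding gbinomial_pochhammer minus_minus power_minus[of r n] by (simp only: mult_ac divide_inverse)
    also have "(-1::real)^n * (-1)^n = 1" by (rule minus_one_mult_self)
    finally show ?thesis by simp
  qed
  ultimately show ?thesis by simp
qed

lemma summable_poch_shift:
  fixes R r :: real
  assumes "0 \<le> R" "0 < r" "r < 1"
  shows "summable (\<lambda>j. pochhammer R (j + m) / fact (j + m) * r^j)"
proof -
  have "summable (\<lambda>j. pochhammer R (j + m) / fact (j + m) * r^(j+m))"
    using summable_poch[of R r] assms by (subst summable_iff_shift[of _ m]) auto
  hence "summable (\<lambda>j. (pochhammer R (j + m) / fact (j + m) * r^(j+m)) / r^m)"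
    by (rule summable_divide)
  moreover have "(pochhammer R (j + m) / fact (j + m) * r^(j+m)) / r^m = pochhammer R (j + m) / fact (j + m) * r^j" for j
    using assms by (simp add: power_add)
  ultimately show ?thesis by simp
qed

lemma infsum_nat_eq:
  fixes h :: "nat \<Rightarrow> 'a::banach"
  assumes "summable (\<lambda>n. norm (h n))"
  shows "infsum h UNIV = suminf h"
  by (rule infsumI, rule norm_summable_imp_has_sum[OF assms])
     (use assms summable_norm_cancel in \<open>auto intro: summable_sums\<close>)

lemma norm_le_suminf_norm:
  fixes h :: "nat \<Rightarrow> 'a::banach"
  assumes "summable (\<lambda>n. norm (h n))"
  shows "norm (h j) \<le> (\<Sum>n. norm (h n))"
proof -
  have "norm (h j) \<le> (\<Sum>n<Suc j. norm (h n))"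
    by (simp add: sum_nonneg)
  also have "\<dots> \<le> (\<Sum>n. norm (h n))"
    using assms by (intro sum_le_suminf) auto
  finally show ?thesis .
qed

lemma fubini_nat:
  fixes f :: "nat \<Rightarrow> nat \<Rightarrow> complex"
  assumes rows: "\<And>k. summable (\<lambda>j. norm (f k j))"
      and tot: "summable (\<lambda>k. \<Sum>j. norm (f k j))"
  shows "(\<lambda>j. \<Sum>k. f k j) sums (\<Sum>k. \<Sum>j. f k j)"
proof -
  define g where "g = (\<lambda>(k,j). f k j)"
  have rowsum: "(\<lambda>j. norm (g (k, j))) summable_on UNIV" for k
    using rows[of k] by (subst summable_on_UNIV_nonneg_real_iff) (auto simp: g_def)
  have rowinf: "infsum (\<lambda>j. norm (g (k,j))) UNIV = (\<Sum>j. norm (f k j))" for k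
    using rows[of k] by (subst infsum_nat_eq) (auto simp: g_def)
  have "(\<lambda>k. norm (infsum (\<lambda>j. norm (g (k,j))) UNIV)) summable_on UNIV"
  proof -
    have e: "(\<lambda>k. \<bar>\<Sum>j. norm (f k j)\<bar>) = (\<lambda>k. \<Sum>j. norm (f k j))"
      using rows by (intro ext abs_of_nonneg suminf_nonneg) auto
    show ?thesis unfolding rowinf using tot
      by (subst summable_on_UNIV_nonneg_real_iff) (auto simp: e)
  qed
  with rowsum have abs: "(\<lambda>x. norm (g x)) summable_on (UNIV \<times> UNIV)"
    using Infinite_Sum.abs_summable_on_Sigma_iff[where f=g and A=UNIV and B="\<lambda>_. UNIV"] by auto
  have gs: "(\<lambda>(k,j). f k j) summable_on (UNIV \<times> UNIV)"
    using abs_summable_summable[OF abs] unfolding g_def by assumption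
  have cols: "summable (\<lambda>k. norm (f k j))" for j
    by (rule summable_comparison_test[OF _ tot])
       (auto intro!: exI[of _ 0] norm_le_suminf_norm rows)
  have outer: "summable (\<lambda>k. norm (\<Sum>j. f k j))"
    by (rule summable_comparison_test[OF _ tot])
       (auto intro!: exI[of _ 0] summable_norm rows)
  have sw: "(\<lambda>(j,k). f k j) summable_on (UNIV \<times> UNIV)"
    using gs by (subst summable_on_swap) (simp add: case_prod_unfold)
  from summable_on_Sigma_banach[OF sw]
  have "(\<lambda>j. infsum (\<lambda>k. f k j) UNIV) summable_on UNIV" by simp
  hence "((\<lambda>j. infsum (\<lambda>k. f k j) UNIV) has_sum infsum (\<lambda>j. infsum (\<lambda>k. f k j) UNIV) UNIV) UNIV"
    by (simp add: summable_iff_has_sum_infsum)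
  hence "(\<lambda>j. infsum (\<lambda>k. f k j) UNIV) sums infsum (\<lambda>j. infsum (\<lambda>k. f k j) UNIV) UNIV"
    by (rule has_sum_imp_sums)
  also have "infsum (\<lambda>j. infsum (\<lambda>k. f k j) UNIV) UNIV = infsum (\<lambda>k. infsum (\<lambda>j. f k j) UNIV) UNIV"
    using infsum_swap_banach[OF gs] by simp
  also have "\<dots> = (\<Sum>k. \<Sum>j. f k j)"
    using rows outer by (simp add: infsum_nat_eq)
  finally show ?thesis
    using cols by (simp add: infsum_nat_eq)
qed

abbreviation hz where "hz \<equiv> hurwitz_zeta_series"

lemma norm_shift_powr:
  "b > 0 \<Longrightarrow> norm (complex_of_real (real k + b) powr s) = (real k + b) powr Re s"
  by (subst norm_powr_real_powr) auto

lemma norm_shift_powr':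
  "b > 0 \<Longrightarrow> norm ((of_nat k + complex_of_real b) powr s) = (real k + b) powr Re s"
  using norm_shift_powr[of b k s] by simp

lemma summable_shift_powr:
  assumes "b > 0" "\<sigma> > 1"
  shows "summable (\<lambda>k. (real k + b) powr (-\<sigma>))"
proof (rule summable_comparison_test')
  show "summable (\<lambda>k. real k powr (-\<sigma>))"
    using assms by (subst summable_real_powr_iff) auto
  show "norm ((real k + b) powr (-\<sigma>)) \<le> real k powr (-\<sigma>)" if "k \<ge> 1" for k
    using assms that by (auto intro!: powr_mono2')
qed

lemma hz_summable_norm:
  assumes "b > 0" "Re s > 1"
  shows "summable (\<lambda>k. norm (complex_of_real (real k + b) powr (-s)))"
  using summable_shift_powr[OF assms(1,2)] assms by (simp add: norm_shift_powr norm_shift_powr')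

lemma hz_sums:
  assumes "b > 0" "Re s > 1"
  shows "(\<lambda>k. complex_of_real (real k + b) powr (-s)) sums hz b s"
  unfolding hurwitz_zeta_series_def
  using summable_norm_cancel[OF hz_summable_norm[OF assms]] by (rule summable_sums)

lemma hz_holo:
  assumes b: "b > 0"
  shows "hz b holomorphic_on {s. Re s > 1}"
proof -
  have eq: "hz b = (\<lambda>s. suminf (\<lambda>i. complex_of_real (real i + b) powr (-s)))"
    by (simp add: hurwitz_zeta_series_def [abs_def])
  show ?thesis unfolding eq
  proof (rule holomorphic_uniform_sequence[where f = "\<lambda>n s. \<Sum>i<n. complex_of_real (real i + b) powr (-s)"])
    show "open {s. Re s > 1}" by (rule open_halfspace_Re_gt)
    show "(\<lambda>s. \<Sum>i<n. complex_of_real (real i + b) powr (-s)) holomorphic_on {s. Re s > 1}" for n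
      by (intro holomorphic_intros)
    fix x assume x: "x \<in> {s. Re s > 1}"
    define d where "d = (Re x - 1) / 2"
    have d: "d > 0" using x by (simp add: d_def)
    have cb: "Re y \<ge> Re x - d" if "y \<in> cball x d" for y
    proof -
      have "\<bar>Re x - Re y\<bar> \<le> norm (x - y)" using abs_Re_le_cmod[of "x - y"] by simp
      also have "\<dots> \<le> d" using that by (simp add: dist_norm)
      finally show ?thesis by linarith
    qed
    have sub: "cball x d \<subseteq> {s. Re s > 1}"
    proof
    fix y assume "y \<in> cball x d"
    from cb[OF this] x show "y \<in> {s. Re s > 1}" by (simp add: d_def field_simps)
  qed
    have "uniform_limit (cball x d) (\<lambda>n s. \<Sum>i<n. complex_of_real (real i + b) powr (-s))
            (\<lambda>s. suminf (\<lambda>i. complex_of_real (real i + b) powr (-s))) sequentially"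
    proof (rule Weierstrass_m_test_ev)
      show "summable (\<lambda>k. (real k + b) powr (-(Re x - d)))"
        using x b by (intro summable_shift_powr) (auto simp: d_def field_simps)
      show "\<forall>\<^sub>F n in sequentially. \<forall>y\<in>cball x d. norm (complex_of_real (real n + b) powr (-y))
               \<le> (real n + b) powr (-(Re x - d))"
        using eventually_ge_at_top[of "1::nat"]
      proof eventually_elim
        case (elim n)
        show ?case
        proof
          fix y assume y: "y \<in> cball x d"
          have "norm (complex_of_real (real n + b) powr (-y)) = (real n + b) powr (- Re y)"
            using b by (simp add: norm_shift_powr norm_shift_powr')
          also have "\<dots> \<le> (real n + b) powr (-(Re x - d))"
            using cb[OF y] elim b by (intro powr_mono) auto
          finally show "norm (complex_of_real (real n + b) powr (-y)) \<le> (real n + b) powr (-(Re x - d))" .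
        qed
      qed
    qed
    with d sub show "\<exists>d>0. cball x d \<subseteq> {s. Re s > 1} \<and>
        uniform_limit (cball x d) (\<lambda>n s. \<Sum>i<n. complex_of_real (real i + b) powr (-s))
            (\<lambda>s. suminf (\<lambda>i. complex_of_real (real i + b) powr (-s))) sequentially"
      by blast
  qed
qed

definition Kc :: "real \<Rightarrow> real" where "Kc b = (\<Sum>k. (real k + b) powr (-2))"

lemma hz_bound:
  assumes b: "b \<ge> 1" and w: "Re w \<ge> 2"
  shows "norm (hz b w) \<le> Kc b * b powr (2 - Re w)"
proof -
  have s2: "summable (\<lambda>k. (real k + b) powr (-2))"
    using b by (intro summable_shift_powr) auto
  have "norm (hz b w) \<le> (\<Sum>k. norm (complex_of_real (real k + b) powr (-w)))"
    unfolding hurwitz_zeta_series_def using b w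
    by (intro summable_norm hz_summable_norm) auto
  also have "\<dots> = (\<Sum>k. (real k + b) powr (- Re w))"
    using b by (simp add: norm_shift_powr norm_shift_powr')
  also have "\<dots> \<le> (\<Sum>k. (real k + b) powr (-2) * b powr (2 - Re w))"
  proof (rule suminf_le)
    show "summable (\<lambda>k. (real k + b) powr (- Re w))"
      using b w by (intro summable_shift_powr) auto
    show "summable (\<lambda>k. (real k + b) powr (-2) * b powr (2 - Re w))"
      using s2 by (rule summable_mult2)
    fix k
    have "(real k + b) powr (- Re w) = (real k + b) powr (-2) * (real k + b) powr (2 - Re w)"
      by (subst powr_add[symmetric]) simp
    also have "\<dots> \<le> (real k + b) powr (-2) * b powr (2 - Re w)"
      using b w by (intro mult_left_mono powr_mono2') auto
    finally show "(real k + b) powr (- Re w) \<le> (real k + b) powr (-2) * b powr (2 - Re w)" .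
  qed
  also have "\<dots> = Kc b * b powr (2 - Re w)"
    unfolding Kc_def using s2 by (rule suminf_mult2[symmetric])
  finally show ?thesis .
qed

lemma hz_recursion:
  assumes b: "b > 1" and s: "Re s > 1"
  shows "(\<lambda>j. ((1-s) gchoose (j+2)) * hz b (s + of_nat j + 1)) sums
           ((s-1) * hz b s - complex_of_real b powr (1-s))"
proof -
  define w where "w = 1 - s"
  define x where "x = (\<lambda>k::nat. real k + b)"
  define f where "f = (\<lambda>k j. (w gchoose (j+2)) * complex_of_real (x k) powr (-(s + of_nat j + 1)))"
  define P where "P = (\<lambda>m. pochhammer (norm w) m / fact m)"
  define r where "r = inverse b"
  have xpos: "x k \<ge> b" for k by (simp add: x_def)
  have r: "0 < r" "r < 1" using b by (auto simp: r_def field_simps)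
  have Pn: "P m \<ge> 0" for m by (auto simp: P_def pochhammer_prod intro!: divide_nonneg_pos prod_nonneg)
  have A: "(\<lambda>j. f k j) sums (complex_of_real (x k + 1) powr w - complex_of_real (x k) powr w
              - w * complex_of_real (x k) powr (-s))" for k
  proof -
    have "\<bar>1\<bar> < \<bar>x k\<bar>" using xpos[of k] b by simp
    from gen_binomial_complex''[OF this, of w]
    have "(\<lambda>n. (w gchoose n) * complex_of_real (x k) powr (w - of_nat n)) sums
            complex_of_real (x k + 1) powr w" by simp
    hence S: "(\<lambda>n. (w gchoose (n+2)) * complex_of_real (x k) powr (w - of_nat (n+2))) sums
            (complex_of_real (x k + 1) powr w -
              (\<Sum>n<2. (w gchoose n) * complex_of_real (x k) powr (w - of_nat n)))"
      by (subst sums_iff_shift) simp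
    have sumeq: "(\<Sum>n<2. (w gchoose n) * complex_of_real (x k) powr (w - of_nat n)) =
        complex_of_real (x k) powr w + w * complex_of_real (x k) powr (-s)"
      by (simp add: eval_nat_numeral w_def)
    have e: "w - of_nat (n+2) = -(s + of_nat n + 1)" for n
      by (simp add: w_def algebra_simps)
    from S have "(\<lambda>n. f k n) sums (complex_of_real (x k + 1) powr w -
              (\<Sum>n<2. (w gchoose n) * complex_of_real (x k) powr (w - of_nat n)))"
      unfolding f_def e .
    thus ?thesis unfolding sumeq by (simp add: algebra_simps)
  qed
  have nf: "norm (f k j) \<le> (x k) powr (- Re s) * (P (j+2) * r^(j+1))" for k j
  proof -
    have "norm (f k j) = norm (w gchoose (j+2)) * (x k) powr (-(Re s + j + 1))"
      using xpos[of k] b by (simp add: f_def norm_mult norm_powr_real_powr)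
    also have "(x k) powr (-(Re s + j + 1)) = (x k) powr (- Re s) * (x k) powr (-(real (j+1)))"
      by (subst powr_add[symmetric]) (simp add: algebra_simps)
    finally have e1: "norm (f k j) = norm (w gchoose (j+2)) * ((x k) powr (- Re s) * (x k) powr (-(real (j+1))))" .
    have "(x k) powr (-(real (j+1))) \<le> b powr (-(real (j+1)))"
      using xpos[of k] b by (intro powr_mono2') auto
    also have "b powr (-(real (j+1))) = r^(j+1)"
      using b by (simp add: r_def powr_minus powr_realpow power_inverse del: of_nat_Suc)
    finally have e2: "(x k) powr (-(real (j+1))) \<le> r^(j+1)" .
    have "norm (f k j) \<le> norm (w gchoose (j+2)) * ((x k) powr (- Re s) * r^(j+1))"
      unfolding e1 by (intro mult_left_mono e2) auto
    also have "\<dots> \<le> P (j+2) * ((x k) powr (- Re s) * r^(j+1))"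
      using norm_gchoose_le[of w "j+2"] r by (intro mult_right_mono) (auto simp: P_def)
    also have "\<dots> = (x k) powr (- Re s) * (P (j+2) * r^(j+1))" by (simp only: mult_ac)
    finally show ?thesis .
  qed
  have sP: "summable (\<lambda>j. P (j+2) * r^(j+1))"
  proof -
    have "summable (\<lambda>j. r * (P (j+2) * r^j))"
      using summable_poch_shift[of "norm w" r 2] r by (intro summable_mult) (simp add: P_def)
    thus ?thesis by (simp add: mult_ac)
  qed
  define C where "C = (\<Sum>j. P (j+2) * r^(j+1))"
  have rows: "summable (\<lambda>j. norm (f k j))" for k
    by (rule summable_comparison_test[OF _ summable_mult[OF sP, of "(x k) powr (- Re s)"]])
       (use nf in auto)
  have rowb: "(\<Sum>j. norm (f k j)) \<le> (x k) powr (- Re s) * C" for k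
  proof -
    have "(\<Sum>j. norm (f k j)) \<le> (\<Sum>j. (x k) powr (- Re s) * (P (j+2) * r^(j+1)))"
      by (intro suminf_le rows summable_mult sP nf)
    also have "\<dots> = (x k) powr (- Re s) * C"
      unfolding C_def by (rule suminf_mult[OF sP])
    finally show ?thesis .
  qed
  have tot: "summable (\<lambda>k. \<Sum>j. norm (f k j))"
  proof (rule summable_comparison_test)
    show "summable (\<lambda>k. (x k) powr (- Re s) * C)"
      unfolding x_def using b s by (intro summable_mult2 summable_shift_powr) auto
    show "\<exists>N. \<forall>n\<ge>N. norm (\<Sum>j. norm (f n j)) \<le> (x n) powr (- Re s) * C"
      using rowb rows by (auto intro!: exI[of _ 0] simp: abs_of_nonneg suminf_nonneg)
  qed
  from fubini_nat[OF rows tot]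
  have F: "(\<lambda>j. \<Sum>k. f k j) sums (\<Sum>k. \<Sum>j. f k j)" .
  have col: "(\<Sum>k. f k j) = (w gchoose (j+2)) * hz b (s + of_nat j + 1)" for j
  proof -
    have "(\<lambda>k. complex_of_real (x k) powr (-(s + of_nat j + 1))) sums hz b (s + of_nat j + 1)"
      unfolding x_def using b s by (intro hz_sums) auto
    thus ?thesis unfolding f_def by (simp add: sums_iff suminf_mult)
  qed
  define h where "h = (\<lambda>k. complex_of_real (x k) powr w)"
  have h0: "h \<longlonglongrightarrow> 0"
    unfolding h_def x_def
  proof (rule tendsto_neg_powr_complex_of_real)
    show "filterlim (\<lambda>k. real k + b) at_top sequentially"
    proof -
      have "filterlim (\<lambda>k. b + real k) at_top sequentially"
        by (rule filterlim_tendsto_add_at_top[OF tendsto_const filterlim_real_sequentially])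
      thus ?thesis by (simp add: add.commute)
    qed
    show "Re w < 0" using s by (simp add: w_def)
  qed
  have "(\<lambda>k. (h (Suc k) - h k) - w * complex_of_real (x k) powr (-s)) sums ((0 - h 0) - w * hz b s)"
  proof (rule sums_diff[OF telescope_sums[OF h0]], intro sums_mult)
    show "(\<lambda>k. complex_of_real (x k) powr (-s)) sums hz b s"
      unfolding x_def using b s by (intro hz_sums) auto
  qed
  moreover have "x (Suc k) = x k + 1" for k by (simp add: x_def)
  ultimately have "(\<lambda>k. \<Sum>j. f k j) sums ((0 - h 0) - w * hz b s)"
    using A by (simp add: sums_iff h_def)
  hence "(\<Sum>k. \<Sum>j. f k j) = (s-1) * hz b s - complex_of_real b powr (1-s)"
    by (simp add: sums_iff h_def x_def w_def algebra_simps)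
  with F col show ?thesis by (simp add: w_def)
qed

definition Zf :: "real \<Rightarrow> complex \<Rightarrow> complex" where "Zf b s = (s - 1) * hz b s"
definition cc :: "complex \<Rightarrow> nat \<Rightarrow> complex" where
  "cc s j = - (((1-s) gchoose (j+1)) / of_nat (j+2))"

primrec Fs :: "real \<Rightarrow> nat \<Rightarrow> complex \<Rightarrow> complex" where
  "Fs b 0 = Zf b"
| "Fs b (Suc n) = (\<lambda>s. complex_of_real b powr (1-s) + (\<Sum>j. cc s j * Fs b n (s + of_nat j + 1)))"

lemma Z_rec:
  assumes b: "b > 1" and s: "Re s > 1"
  shows "(\<lambda>j. cc s j * Zf b (s + of_nat j + 1)) sums (Zf b s - complex_of_real b powr (1-s))"
proof -
  have eq: "((1-s) gchoose (j+2)) * hz b (s + of_nat j + 1) = cc s j * Zf b (s + of_nat j + 1)" for j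
  proof -
    have m: "(1-s) * ((1-s) gchoose (j+1)) = of_nat (j+1) * ((1-s) gchoose (j+1)) + of_nat (j+2) * ((1-s) gchoose (j+2))"
      using gbinomial_mult_1[of "1-s" "j+1"] by simp
    have "of_nat (j+2) * ((1-s) gchoose (j+2)) = (1-s) * ((1-s) gchoose (j+1)) - of_nat (j+1) * ((1-s) gchoose (j+1))"
      using m by (metis add_diff_cancel_left')
    also have "\<dots> = - ((s + of_nat j) * ((1-s) gchoose (j+1)))"
      by (simp add: algebra_simps)
    finally have "of_nat (j+2) * ((1-s) gchoose (j+2)) = - ((s + of_nat j) * ((1-s) gchoose (j+1)))" .
    hence "((1-s) gchoose (j+2)) = - ((s + of_nat j) * ((1-s) gchoose (j+1))) / of_nat (j+2)"
      by (simp add: field_simps del: of_nat_Suc of_nat_add)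
    hence "((1-s) gchoose (j+2)) * hz b (s + of_nat j + 1) = - ((s + of_nat j) * ((1-s) gchoose (j+1))) / of_nat (j+2) * hz b (s + of_nat j + 1)"
      by simp
    also have "\<dots> = cc s j * Zf b (s + of_nat j + 1)"
      unfolding cc_def Zf_def by (simp add: divide_simps del: of_nat_Suc of_nat_add)
    finally show ?thesis .
  qed
  have fe: "(\<lambda>j. cc s j * Zf b (s + of_nat j + 1)) = (\<lambda>j. ((1-s) gchoose (j+2)) * hz b (s + of_nat j + 1))"
    by (rule ext) (rule eq[symmetric])
  show ?thesis unfolding fe using hz_recursion[OF b s] by (simp only: Zf_def)
qed

lemma norm_cc_le: "norm (cc s j) \<le> pochhammer (norm (1-s)) (j+1) / fact (j+1)"
proof -
  have "norm (cc s j) = norm ((1-s) gchoose (j+1)) / of_nat (j+2)"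
    by (simp add: cc_def norm_divide del: of_nat_Suc of_nat_add)
  also have "\<dots> \<le> norm ((1-s) gchoose (j+1)) / 1"
    by (rule divide_left_mono) auto
  also have "\<dots> = norm ((1-s) gchoose (j+1))" by simp
  also have "\<dots> \<le> pochhammer (norm (1-s)) (j+1) / fact (j+1)"
    by (rule norm_gchoose_le)
  finally show ?thesis .
qed

lemma cc_altdef: "cc s j = - ((-1)^(j+1) * (\<Prod>i=0..<j+1. s - 1 + of_nat i) / fact (j+1)) / of_nat (j+2)"
  unfolding cc_def gbinomial_pochhammer pochhammer_prod by simp

lemma cc_holo: "(\<lambda>s. cc s j) holomorphic_on A"
  unfolding cc_altdef by (intro holomorphic_intros) auto

lemma cc_one: "cc 1 j = 0"
  by (simp add: cc_def)

lemma Zf_bound: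
  assumes "b \<ge> 1" "Re w \<ge> 2"
  shows "norm (Zf b w) \<le> norm (w - 1) * (Kc b * b powr (2 - Re w))"
  unfolding Zf_def norm_mult by (intro mult_left_mono hz_bound assms) auto

lemma Kc_nonneg: "b > 0 \<Longrightarrow> Kc b \<ge> 0"
  unfolding Kc_def by (intro suminf_nonneg summable_shift_powr) auto

lemma Fs_props:
  assumes b: "b \<ge> 2"
  shows "Fs b n holomorphic_on {s. Re s > 1 - real n} \<and> (\<forall>s. Re s > 1 \<longrightarrow> Fs b n s = Zf b s)"
proof (induction n)
  case 0
  have "Zf b holomorphic_on {s. Re s > 1}"
    unfolding Zf_def [abs_def] using hz_holo[of b] b by (intro holomorphic_intros) auto
  thus ?case by simp
next
  case (Suc n)
  hence hol: "Fs b n holomorphic_on {s. Re s > 1 - real n}"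
    and eqZ: "\<And>s. Re s > 1 \<Longrightarrow> Fs b n s = Zf b s" by auto
  define H where "H = {s. Re s > 1 - real (Suc n)}"
  define t where "t = (\<lambda>j s. cc s j * Fs b n (s + of_nat j + 1))"
  have thol: "t j holomorphic_on H" for j
  proof -
    have "(\<lambda>s. s + of_nat j + 1) holomorphic_on H" by (intro holomorphic_intros)
    moreover have "(\<lambda>s. s + of_nat j + 1) ` H \<subseteq> {s. Re s > 1 - real n}"
      by (auto simp: H_def)
    ultimately have "(Fs b n \<circ> (\<lambda>s. s + of_nat j + 1)) holomorphic_on H"
      using hol by (intro holomorphic_on_compose_gen) auto
    hence "(\<lambda>s. Fs b n (s + of_nat j + 1)) holomorphic_on H" by (simp add: o_def)
    thus ?thesis unfolding t_def by (intro holomorphic_intros cc_holo)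
  qed
  have sumhol: "(\<lambda>s. \<Sum>j. t j s) holomorphic_on H"
  proof (rule holomorphic_uniform_sequence[where f = "\<lambda>m s. \<Sum>j<m. t j s"])
    show "open H" unfolding H_def by (rule open_halfspace_Re_gt)
    show "(\<lambda>s. \<Sum>j<m. t j s) holomorphic_on H" for m by (intro holomorphic_intros thol)
    fix x assume x: "x \<in> H"
    define d where "d = min 1 ((Re x + real n) / 2)"
    have d: "d > 0" "d \<le> 1" "d < Re x + real n" using x by (auto simp: d_def H_def min_def field_simps)
    have cb: "Re y \<ge> Re x - d \<and> norm (x - y) \<le> 1" if "y \<in> cball x d" for y
    proof -
      have "\<bar>Re x - Re y\<bar> \<le> norm (x - y)" using abs_Re_le_cmod[of "x - y"] by simp
      also have "\<dots> \<le> d" using that by (simp add: dist_norm)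
      finally show ?thesis using d that by (auto simp: dist_norm)
    qed
    have sub: "cball x d \<subseteq> H"
    proof
      fix y assume "y \<in> cball x d"
      from cb[OF this] d show "y \<in> H" by (simp add: H_def)
    qed
    define R where "R = norm (1 - x) + 1"
    define r where "r = inverse b"
    define A where "A = (norm x + 1) * (Kc b * b powr (2 - Re x))"
    define J where "J = nat \<lceil>2 - Re x\<rceil>"
    have r: "0 < r" "r < 1" using b by (auto simp: r_def field_simps)
    have KA: "Kc b \<ge> 0" using b by (intro Kc_nonneg) auto
    have "uniform_limit (cball x d) (\<lambda>m s. \<Sum>j<m. t j s) (\<lambda>s. suminf (\<lambda>j. t j s)) sequentially"
    proof (rule Weierstrass_m_test_ev)
      show "summable (\<lambda>j. pochhammer R (j+1) / fact (j+1) * r^j * A)"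
        using r by (intro summable_mult2 summable_poch_shift) (auto simp: R_def)
      show "\<forall>\<^sub>F j in sequentially. \<forall>y\<in>cball x d. norm (t j y) \<le> pochhammer R (j+1) / fact (j+1) * r^j * A"
        using eventually_ge_at_top[of J]
      proof eventually_elim
        case (elim j)
        show ?case
        proof
          fix y assume y: "y \<in> cball x d"
          from cb[OF y] have y1: "Re y \<ge> Re x - d" and y2: "norm (x - y) \<le> 1" by auto
          have jJ: "real j \<ge> 2 - Re x" using elim unfolding J_def by linarith
          have Rey: "Re (y + of_nat j + 1) \<ge> 2" using y1 d jJ by simp
          have Fz: "Fs b n (y + of_nat j + 1) = (y + of_nat j) * hz b (y + of_nat j + 1)"
            using eqZ[of "y + of_nat j + 1"] Rey by (simp add: Zf_def)
          have "norm (1 - y) \<le> norm (1 - x) + norm (x - y)"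
            using norm_triangle_ineq[of "1 - x" "x - y"] by simp
          hence ny: "norm (1 - y) \<le> R" using y2 by (simp add: R_def)
          have n1: "norm ((1-y) gchoose (j+1)) \<le> pochhammer R (j+1) / fact (j+1)"
          proof -
            have "pochhammer (norm (1-y)) (j+1) / fact (j+1) \<le> pochhammer R (j+1) / fact (j+1)"
              using pochhammer_mono_real[OF norm_ge_zero ny, of "j+1"] by (intro divide_right_mono) auto
            with norm_gchoose_le[of "1-y" "j+1"] show ?thesis by linarith
          qed
          have "norm y \<le> norm x + norm (x - y)"
            using norm_triangle_ineq[of x "y - x"] by (simp add: norm_minus_commute)
          hence "norm y \<le> norm x + 1" using y2 by simp
          hence "norm (y + of_nat j) \<le> norm x + 1 + real j"
            using norm_triangle_ineq[of y "of_nat j"] by simp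
          also have "\<dots> \<le> (norm x + 1) * (real j + 2)"
            by (simp add: algebra_simps)
          finally have n3: "norm (y + of_nat j) / (real j + 2) \<le> norm x + 1"
            by (simp add: divide_simps)
          have "norm (hz b (y + of_nat j + 1)) \<le> Kc b * b powr (2 - Re (y + of_nat j + 1))"
            using b Rey by (intro hz_bound) auto
          also have "b powr (2 - Re (y + of_nat j + 1)) \<le> b powr (2 - Re x - real j)"
            using b y1 d by (intro powr_mono) auto
          also have "b powr (2 - Re x - real j) = b powr (2 - Re x) * r^j"
            using b by (simp add: r_def powr_diff powr_realpow power_inverse divide_inverse)
          finally have n4: "norm (hz b (y + of_nat j + 1)) \<le> Kc b * (b powr (2 - Re x) * r^j)"
            using KA by (simp add: mult_left_mono)
          have nj: "cmod (of_nat j + 2) = real j + 2"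
            using norm_of_nat[of "j+2", where 'a=complex] by (simp add: add.commute)
          have "norm (t j y) = norm ((1-y) gchoose (j+1)) * (norm (y + of_nat j) / (real j + 2)) * norm (hz b (y + of_nat j + 1))"
            unfolding t_def Fz cc_def by (simp add: norm_mult norm_divide norm_minus_cancel add_ac mult_ac nj)
          also have "\<dots> \<le> (pochhammer R (j+1) / fact (j+1)) * (norm x + 1) * (Kc b * (b powr (2 - Re x) * r^j))"
          proof -
            have "0 \<le> pochhammer R (j+1) / fact (j+1)"
            proof -
              have "R > 0" by (simp add: R_def add_nonneg_pos)
              from pochhammer_pos[OF this, of "j+1"] show ?thesis by simp
            qed
            thus ?thesis by (intro mult_mono n1 n3 n4 mult_nonneg_nonneg) auto
          qed
          also have "\<dots> = pochhammer R (j+1) / fact (j+1) * r^j * A"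
            by (simp add: A_def mult_ac)
          finally show "norm (t j y) \<le> pochhammer R (j+1) / fact (j+1) * r^j * A" .
        qed
      qed
    qed
    with d sub show "\<exists>d>0. cball x d \<subseteq> H \<and>
        uniform_limit (cball x d) (\<lambda>m s. \<Sum>j<m. t j s) (\<lambda>s. suminf (\<lambda>j. t j s)) sequentially"
      by blast
  qed
  have Fe: "Fs b (Suc n) = (\<lambda>s. complex_of_real b powr (1-s) + (\<Sum>j. t j s))"
    by (simp add: t_def)
  have "Fs b (Suc n) holomorphic_on H"
    unfolding Fe by (intro holomorphic_intros sumhol)
  moreover have "Fs b (Suc n) s = Zf b s" if s: "Re s > 1" for s
  proof -
    have "t j s = cc s j * Zf b (s + of_nat j + 1)" for j
      unfolding t_def using s by (subst eqZ) auto
    hence "(\<lambda>j. t j s) sums (Zf b s - complex_of_real b powr (1-s))"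
      using Z_rec[of b s] b s by simp
    thus ?thesis unfolding Fe by (simp add: sums_iff)
  qed
  ultimately show ?case by (simp add: H_def)
qed

definition NN :: "complex \<Rightarrow> nat" where "NN s = Suc (nat \<lceil>1 - Re s\<rceil>)"
definition GG :: "real \<Rightarrow> complex \<Rightarrow> complex" where "GG b s = Fs b (NN s) s"

lemma NN_prop: "Re s > 1 - real (NN s)"
  unfolding NN_def by linarith

lemma Fs_consistent:
  assumes b: "b \<ge> 2" and mn: "m \<le> n" and s: "Re s > 1 - real m"
  shows "Fs b n s = Fs b m s"
proof (rule analytic_continuation_open[of "{s. Re s > 1}" "{s. Re s > 1 - real m}" "Fs b n" "Fs b m" s])
  show "open {s. Re s > 1}" by (rule open_halfspace_Re_gt)
  show "open {s. Re s > 1 - real m}" by (rule open_halfspace_Re_gt)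
  show "{s. Re s > 1} \<noteq> {}" by (auto intro!: exI[of _ 2])
  show "connected {s. Re s > 1 - real m}" by (rule convex_connected, rule convex_halfspace_Re_gt)
  show "{s. Re s > 1} \<subseteq> {s. Re s > 1 - real m}" by auto
  show "Fs b n holomorphic_on {s. Re s > 1 - real m}"
  proof (rule holomorphic_on_subset[of _ "{s. Re s > 1 - real n}"])
    show "Fs b n holomorphic_on {s. Re s > 1 - real n}" using Fs_props[OF b, of n] by auto
    show "{s. Re s > 1 - real m} \<subseteq> {s. Re s > 1 - real n}" using mn by auto
  qed
  show "Fs b m holomorphic_on {s. Re s > 1 - real m}"
    using Fs_props[OF b, of m] by auto
  show "Fs b n z = Fs b m z" if "z \<in> {s. Re s > 1}" for z
    using Fs_props[OF b, of n] Fs_props[OF b, of m] that by auto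
  show "s \<in> {s. Re s > 1 - real m}" using s by simp
qed

lemma GG_local:
  assumes b: "b \<ge> 2" and s: "Re s > 1 - real (NN z)"
  shows "GG b s = Fs b (NN z) s"
proof -
  define m where "m = min (NN s) (NN z)"
  have sm: "Re s > 1 - real m" using s NN_prop[of s] by (auto simp: m_def min_def)
  have "Fs b (NN s) s = Fs b m s" by (rule Fs_consistent[OF b _ sm]) (simp add: m_def)
  also have "\<dots> = Fs b (NN z) s" by (rule Fs_consistent[OF b _ sm, symmetric]) (simp add: m_def)
  finally show ?thesis by (simp add: GG_def)
qed

lemma GG_holo:
  assumes b: "b \<ge> 2"
  shows "GG b holomorphic_on UNIV"
  unfolding holomorphic_on_def
proof
  fix z :: complex
  define H where "H = {s. Re s > 1 - real (NN z)}"
  have oH: "open H" unfolding H_def by (rule open_halfspace_Re_gt)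
  have "Fs b (NN z) holomorphic_on H" using Fs_props[OF b, of "NN z"] by (simp add: H_def)
  hence "GG b holomorphic_on H"
    by (rule holomorphic_transform) (use GG_local[OF b] in \<open>auto simp: H_def\<close>)
  moreover have "z \<in> H" using NN_prop[of z] by (simp add: H_def)
  ultimately have "GG b field_differentiable at z"
    using oH by (intro holomorphic_on_imp_differentiable_at)
  thus "GG b field_differentiable at z within UNIV" by simp
qed

lemma GG_Z:
  assumes b: "b \<ge> 2" and s: "Re s > 1"
  shows "GG b s = Zf b s"
  using Fs_props[OF b, of "NN s"] s by (simp add: GG_def)

lemma GG_one:
  assumes b: "b \<ge> 2"
  shows "GG b 1 = 1"
  using b by (simp add: GG_def NN_def cc_one powr_zero_eq_one)

definition GA :: "real \<Rightarrow> complex \<Rightarrow> complex" where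
  "GA a s = (s - 1) * (\<Sum>k<4. complex_of_real (real k + a) powr (-s)) + GG (a + 4) s"

lemma GA_holo: "a > 0 \<Longrightarrow> GA a holomorphic_on UNIV"
  unfolding GA_def [abs_def] by (intro holomorphic_intros GG_holo) auto

lemma GA_one: "a > 0 \<Longrightarrow> GA a 1 = 1"
  unfolding GA_def by (simp add: GG_one)

lemma hz_shift4:
  assumes a: "a > 0" and s: "Re s > 1"
  shows "hz a s = (\<Sum>k<4. complex_of_real (real k + a) powr (-s)) + hz (a + 4) s"
proof -
  define f where "f = (\<lambda>k::nat. complex_of_real (real k + a) powr (-s))"
  have "(\<lambda>i. complex_of_real (real i + (a + 4)) powr (-s)) sums hz (a + 4) s"
    using a s by (intro hz_sums) auto
  moreover have "(\<lambda>i. f (i + 4)) = (\<lambda>i. complex_of_real (real i + (a + 4)) powr (-s))"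
    by (rule ext) (simp add: f_def algebra_simps)
  ultimately have "(\<lambda>i. f (i + 4)) sums hz (a + 4) s" by simp
  hence "f sums (hz (a + 4) s + (\<Sum>i<4. f i))" by (subst (asm) sums_iff_shift)
  moreover have "f sums hz a s" unfolding f_def using a s by (rule hz_sums)
  ultimately show ?thesis by (simp add: sums_iff f_def add.commute)
qed

lemma GA_Z:
  assumes a: "a > 0" and s: "Re s > 1"
  shows "GA a s = (s - 1) * hz a s"
  using a s by (simp add: GA_def GG_Z Zf_def hz_shift4[OF a s] algebra_simps)

definition greg :: "real \<Rightarrow> complex \<Rightarrow> complex" where
  "greg a = (\<lambda>z. if z = 1 then deriv (GA a) 1 else (GA a z - GA a 1) / (z - 1))"

lemma greg_holo: "a > 0 \<Longrightarrow> greg a holomorphic_on UNIV"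
  unfolding greg_def by (rule pole_lemma[OF GA_holo]) auto

lemma greg_eq:
  assumes a: "a > 0" and s: "Re s > 1"
  shows "greg a s = hz a s - 1 / (s - 1)"
proof -
  have "s \<noteq> 1" using s by auto
  thus ?thesis using a s by (simp add: greg_def GA_one GA_Z field_simps)
qed

lemma regular_eq:
  assumes a: "a > 0"
  shows "hurwitz_zeta_regular a = greg a"
  unfolding hurwitz_zeta_regular_def
proof (rule the_equality)
  show "greg a holomorphic_on UNIV \<and> (\<forall>s. Re s > 1 \<longrightarrow> greg a s = hz a s - 1 / (s - 1))"
    using greg_holo[OF a] greg_eq[OF a] by auto
  fix g assume g: "g holomorphic_on UNIV \<and> (\<forall>s. Re s > 1 \<longrightarrow> g s = hz a s - 1 / (s - 1))"
  show "g = greg a"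
  proof
    fix z
    show "g z = greg a z"
    proof (rule analytic_continuation_open[of "{s. Re s > 1}" UNIV g "greg a" z])
      show "open {s. Re s > 1}" by (rule open_halfspace_Re_gt)
      show "{s. Re s > 1} \<noteq> {}" by (auto intro!: exI[of _ 2])
    qed (use g greg_holo[OF a] greg_eq[OF a] in auto)
  qed
qed

lemma stieltjes_sums:
  assumes a: "a > 0"
  shows "(\<lambda>n. (-1) ^ n / fact n * 2 ^ n * stieltjes n a) sums (hz a 3 - 1/2)"
proof -
  have "(\<lambda>n. (deriv ^^ n) (greg a) 1 / fact n * (3 - 1)^n) sums greg a 3"
    by (rule holomorphic_power_series[where r = 3])
       (auto intro: holomorphic_on_subset[OF greg_holo[OF a]] simp: dist_norm)
  moreover have "(\<lambda>n. (-1) ^ n / fact n * 2 ^ n * stieltjes n a) = (\<lambda>n. (deriv ^^ n) (greg a) 1 / fact n * (3 - 1)^n)"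
  proof
    fix n
    have m1: "((-1)::complex) ^ n * (-1) ^ n = 1" by (rule minus_one_mult_self)
    have "(-1) ^ n / fact n * 2 ^ n * stieltjes n a = (((-1)::complex) ^ n * (-1) ^ n) * ((deriv ^^ n) (greg a) 1 / fact n * 2^n)"
      by (simp add: stieltjes_def regular_eq[OF a] mult_ac)
    also have "\<dots> = (deriv ^^ n) (greg a) 1 / fact n * (3 - 1)^n"
      unfolding m1 by simp
    finally show "(-1) ^ n / fact n * 2 ^ n * stieltjes n a = (deriv ^^ n) (greg a) 1 / fact n * (3 - 1)^n" .
  qed
  moreover have "greg a 3 = hz a 3 - 1/2"
    using greg_eq[OF a, of 3] by simp
  ultimately show ?thesis by (simp only:)
qed

lemma deriv_zero_on_interval:
  fixes F :: "real \<Rightarrow> real"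
  assumes "\<And>y. y \<in> {0<..<1} \<Longrightarrow> F y = 0" "x \<in> {0<..<1}" "(F has_real_derivative D) (at x)"
  shows "D = 0"
proof -
  have "((\<lambda>_. 0) has_real_derivative D) (at x)"
    by (rule has_field_derivative_transform_within_open[OF assms(3), of "{0<..<1}"]) (use assms in auto)
  moreover have "((\<lambda>_. 0::real) has_real_derivative 0) (at x)" by (rule DERIV_const)
  ultimately show ?thesis by (rule DERIV_unique)
qed

lemma pos_not_nonpos_Int: "(x::real) > 0 \<Longrightarrow> x \<notin> \<int>\<^sub>\<le>\<^sub>0"
  by (auto elim!: nonpos_Ints_cases)

lemma Gamma_reflection_real:
  assumes "0 < x" "x < 1"
  shows "Gamma x * Gamma (1 - x) = pi / sin (pi * x)"
proof -
  have e: "1 - complex_of_real x = complex_of_real (1 - x)" by simp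
  have "Gamma (complex_of_real x) * Gamma (complex_of_real (1 - x)) = of_real pi / sin (of_real pi * of_real x)"
    using Gamma_reflection_complex[of "complex_of_real x"] unfolding e .
  hence "complex_of_real (Gamma x) * complex_of_real (Gamma (1 - x)) = of_real pi / sin (of_real pi * of_real x)"
    unfolding Gamma_complex_of_real .
  moreover have "sin (complex_of_real pi * complex_of_real x) = complex_of_real (sin (pi * x))"
    by (metis of_real_mult sin_of_real)
  ultimately have "complex_of_real (Gamma x * Gamma (1 - x)) = complex_of_real (pi / sin (pi * x))"
    by (simp only: of_real_mult of_real_divide)
  thus ?thesis by (simp only: of_real_eq_iff)
qed

lemma E0:
  assumes x: "x \<in> {0<..<1}"
  shows "ln_Gamma x + ln_Gamma (1 - x) + ln (sin (pi * x)) - ln pi = 0"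
proof -
  from x have x0: "0 < x" "x < 1" by auto
  have sp: "sin (pi * x) > 0" using x0 by (intro sin_gt_zero) auto
  have "ln_Gamma x + ln_Gamma (1 - x) = ln (Gamma x * Gamma (1 - x))"
  proof -
    have g: "Gamma x > 0" "Gamma (1 - x) > 0" using x0 by (auto intro: Gamma_real_pos)
    hence g2: "Gamma x \<noteq> 0" "Gamma (1 - x) \<noteq> 0" by auto
    show ?thesis using x0 by (simp add: ln_Gamma_real_pos ln_mult g2)
  qed
  also have "\<dots> = ln (pi / sin (pi * x))" using Gamma_reflection_real[OF x0] by simp
  also have "\<dots> = ln pi - ln (sin (pi * x))" using sp by (simp add: ln_div)
  finally show ?thesis by simp
qed

lemma E1:
  assumes x: "x \<in> {0<..<1}"
  shows "Digamma x - Digamma (1 - x) + pi * cos (pi * x) / sin (pi * x) = 0"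
proof (rule deriv_zero_on_interval[OF E0 x])
  from x have x0: "0 < x" "x < 1" by auto
  have sp: "sin (pi * x) > 0" using x0 by (intro sin_gt_zero) auto
  show "((\<lambda>x. ln_Gamma x + ln_Gamma (1 - x) + ln (sin (pi * x)) - ln pi) has_real_derivative
     Digamma x - Digamma (1 - x) + pi * cos (pi * x) / sin (pi * x)) (at x)"
    using x0 sp by (auto intro!: derivative_eq_intros simp: field_simps)
qed

lemma E2:
  assumes x: "x \<in> {0<..<1}"
  shows "Polygamma 1 x + Polygamma 1 (1 - x) - pi^2 / sin (pi * x)^2 = 0"
proof (rule deriv_zero_on_interval[OF E1 x])
  from x have x0: "0 < x" "x < 1" by auto
  have sp: "sin (pi * x) > 0" using x0 by (intro sin_gt_zero) auto
  have n1: "x \<notin> \<int>\<^sub>\<le>\<^sub>0" "1 - x \<notin> \<int>\<^sub>\<le>\<^sub>0" using x0 by (auto intro!: pos_not_nonpos_Int)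
  show "((\<lambda>x. Digamma x - Digamma (1 - x) + pi * cos (pi * x) / sin (pi * x)) has_real_derivative
     Polygamma 1 x + Polygamma 1 (1 - x) - pi^2 / sin (pi * x)^2) (at x)"
    using x0 sp n1
    by (auto intro!: derivative_eq_intros simp: field_simps power2_eq_square)
       (simp add: algebra_simps sin_squared_eq flip: power2_eq_square)
qed

lemma E3:
  assumes x: "x \<in> {0<..<1}"
  shows "Polygamma 2 x - Polygamma 2 (1 - x) + 2 * pi^3 * cos (pi * x) / sin (pi * x)^3 = 0"
proof (rule deriv_zero_on_interval[OF E2 x])
  from x have x0: "0 < x" "x < 1" by auto
  have sp: "sin (pi * x) > 0" using x0 by (intro sin_gt_zero) auto
  have n1: "x \<notin> \<int>\<^sub>\<le>\<^sub>0" "1 - x \<notin> \<int>\<^sub>\<le>\<^sub>0" using x0 by (auto intro!: pos_not_nonpos_Int)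
  show "((\<lambda>x. Polygamma 1 x + Polygamma 1 (1 - x) - pi^2 / sin (pi * x)^2) has_real_derivative
     Polygamma 2 x - Polygamma 2 (1 - x) + 2 * pi^3 * cos (pi * x) / sin (pi * x)^3) (at x)"
    using x0 sp n1
    by (auto intro!: derivative_eq_intros simp: field_simps power2_eq_square power3_eq_cube eval_nat_numeral)
qed

lemma trig7_alg:
  fixes c s :: real
  assumes p: "8* c^3 - 4* c^2 - 4* c + 1 = 0" and s2: "s^2 = 1 - c^2" and s: "s > 0" and c: "c > 1/2"
  shows "c / s^3 + (2* c^2 - 1) / (2* s* c)^3 - (4* c^3 - 3* c) / (s*(4* c^2 - 1))^3
           = 32 / (4* s*(2* c - 1)*(c + 1))"
proof -
  define A where "A = 4* c^2 - 1"
  define inner where "inner = 8* c^4*A^3 + (2* c^2-1)*A^3 - 8* c^3*(4* c^3-3* c)"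
  have "c * c > 1/2 * (1/2)" using c by (intro mult_strict_mono) auto
  hence A: "A > 0" unfolding A_def by (simp add: power2_eq_square)
  have c0: "c > 0" using c by linarith
  have "inner*(2* c-1)*(c+1) - 64* c^3*A^3*(1-c^2) =
        (c+1)*(-1 - 2* c + 2* c^2 + 44* c^3 + 48* c^4 - 240* c^5 - 256* c^6 + 512* c^7 + 128* c^8)
          * (8* c^3 - 4* c^2 - 4* c + 1)"
    unfolding inner_def A_def by algebra
  with p have key: "inner*(2* c-1)*(c+1) = 64* c^3*A^3* s^2" by (simp add: s2)
  have l: "c / s^3 + (2* c^2 - 1) / (2* s* c)^3 - (4* c^3 - 3* c) / (s*(4* c^2 - 1))^3 = inner / (8* c^3*A^3* s^3)"
    unfolding inner_def A_def[symmetric] using s c0 A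
    by (simp add: field_simps power_mult_distrib) (simp add: algebra_simps eval_nat_numeral)
  have "inner / (8* c^3*A^3* s^3) = 32 / (4* s*(2* c - 1)*(c + 1))"
  proof (subst frac_eq_eq)
    show "8* c^3*A^3* s^3 \<noteq> 0" using s c0 A by simp
    show "4* s*(2* c - 1)*(c + 1) \<noteq> 0" using s c by simp
    show "inner * (4* s*(2* c - 1)*(c + 1)) = 32 * (8* c^3*A^3* s^3)"
    proof -
      have "inner * (4* s*(2* c - 1)*(c + 1)) = 4* s*(inner*(2* c-1)*(c+1))" by (simp add: algebra_simps)
      also have "\<dots> = 4* s*(64* c^3*A^3* s^2)" by (simp add: key)
      also have "\<dots> = 32 * (8* c^3*A^3* s^3)" by (simp add: algebra_simps power2_eq_square power3_eq_cube)
      finally show ?thesis .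
    qed
  qed
  with l show ?thesis by simp
qed

lemma hz3:
  assumes x: "x > 0"
  shows "hz x 3 = complex_of_real (- Polygamma 2 x / 2)"
proof -
  have "(\<lambda>k. inverse ((x + of_nat k)^Suc 2)) sums ((-1)^Suc 2 * Polygamma 2 x / fact 2)"
    using x by (intro Polygamma_LIMSEQ) auto
  hence "(\<lambda>k. inverse ((x + real k)^3)) sums (- Polygamma 2 x / 2)"
    by (simp add: numeral_3_eq_3)
  hence A: "(\<lambda>k. complex_of_real (inverse ((x + real k)^3))) sums complex_of_real (- Polygamma 2 x / 2)"
    by (rule sums_of_real)
  have e: "complex_of_real (real k + x) powr (-3) = complex_of_real (inverse ((x + real k)^3))" for k
  proof -
    have y: "real k + x > 0" using x by simp
    have "complex_of_real (real k + x) powr (-3) = complex_of_real (real k + x) powr complex_of_real (-3)"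
      by simp
    also have "\<dots> = complex_of_real ((real k + x) powr (-3))"
      using y by (intro powr_of_real) auto
    also have "(real k + x) powr (-3) = inverse ((x + real k)^3)"
      using y by (simp add: powr_minus powr_numeral add.commute)
    finally show ?thesis .
  qed
  have "(\<lambda>k. complex_of_real (real k + x) powr (-3)) sums hz x 3"
    using x by (intro hz_sums) auto
  hence "(\<lambda>k. complex_of_real (inverse ((x + real k)^3))) sums hz x 3"
    by (simp only: e)
  with A show ?thesis by (simp add: sums_iff)
qed

lemma hz3_diff:
  assumes "0 < x" "x < 1"
  shows "hz x 3 - hz (1 - x) 3 = complex_of_real (pi^3 * cos (pi * x) / sin (pi * x)^3)"
proof -
  have "Polygamma 2 x - Polygamma 2 (1 - x) + 2 * pi^3 * cos (pi * x) / sin (pi * x)^3 = 0"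
    using assms by (intro E3) auto
  hence "pi^3 * cos (pi * x) / sin (pi * x)^3 = - Polygamma 2 x / 2 - (- Polygamma 2 (1 - x) / 2)"
    by (simp add: field_simps)
  thus ?thesis using assms by (simp add: hz3)
qed

lemma value3: "hz (1/3) 3 - hz (2/3) 3 = complex_of_real (pi^3 * (1/2) / (sqrt 3 / 2)^3)"
proof -
  have "hz (1/3) 3 - hz (1 - 1/3) 3 = complex_of_real (pi^3 * cos (pi * (1/3)) / sin (pi * (1/3))^3)"
    by (rule hz3_diff) auto
  moreover have "(1 - 1/3 :: real) = 2/3" by simp
  moreover have "pi * (1/3) = pi / 3" by simp
  ultimately show ?thesis by (simp only: cos_60 sin_60)
qed

lemma final3: "pi^3 = 81 / (4 * 3 powr (5/2)) * (pi^3 * (1/2) / (sqrt 3 / 2)^3)"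
proof -
  have "3 powr (5/2::real) = 3 powr (2 + 1/2)" by simp
  also have "\<dots> = 9 * sqrt 3" by (subst powr_add) (simp add: powr_half_sqrt)
  finally have p: "3 powr (5/2::real) = 9 * sqrt 3" .
  have s3: "sqrt 3 ^ 3 = 3 * sqrt (3::real)"
    by (simp add: power3_eq_cube)
  show ?thesis unfolding p by (simp add: power_divide s3 field_simps)
qed

lemma value7:
  "(hz (1/7) 3 - hz (6/7) 3) + (hz (2/7) 3 - hz (5/7) 3) - (hz (3/7) 3 - hz (4/7) 3)
     = complex_of_real (pi^3 * 32 / sqrt 7)"
proof -
  define t where "t = pi / 7"
  define c where "c = cos t"
  define s where "s = sin t"
  have t: "0 < t" "t < pi" by (auto simp: t_def)
  have d1: "hz (1/7) 3 - hz (6/7) 3 = complex_of_real (pi^3 * (c / s^3))"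
  proof -
    have "hz (1/7) 3 - hz (1 - 1/7) 3 = complex_of_real (pi^3 * cos (pi * (1/7)) / sin (pi * (1/7))^3)"
      by (rule hz3_diff) auto
    moreover have n: "(1 - 1/7 :: real) = 6/7" by simp
    moreover have e: "pi * (1/7) = t" by (simp add: t_def)
    ultimately show ?thesis unfolding c_def s_def times_divide_eq_right by (simp only:)
  qed
  have d2: "hz (2/7) 3 - hz (5/7) 3 = complex_of_real (pi^3 * ((2*c^2 - 1) / (2 * s * c)^3))"
  proof -
    have "hz (2/7) 3 - hz (1 - 2/7) 3 = complex_of_real (pi^3 * cos (pi * (2/7)) / sin (pi * (2/7))^3)"
      by (rule hz3_diff) auto
    moreover have n: "(1 - 2/7 :: real) = 5/7" by simp
    moreover have e: "pi * (2/7) = 2 * t" by (simp add: t_def)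
    ultimately show ?thesis unfolding c_def s_def times_divide_eq_right by (simp only: cos_double_cos sin_double)
  qed
  have s3t: "sin (3 * t) = s * (4 * c^2 - 1)"
  proof -
    have "sin (3 * t) = sin (2 * t + t)" by simp
    also have "\<dots> = sin (2 * t) * cos t + cos (2 * t) * sin t" by (rule sin_add)
    also have "\<dots> = (2 * s * c) * c + (2 * c^2 - 1) * s"
      by (simp only: sin_double cos_double_cos c_def s_def)
    also have "\<dots> = s * (4 * c^2 - 1)"
      by (simp add: algebra_simps power2_eq_square)
    finally show ?thesis .
  qed
  have c3t: "cos (3 * t) = 4 * c^3 - 3 * c" by (simp add: cos_treble_cos c_def)
  have d3: "hz (3/7) 3 - hz (4/7) 3 = complex_of_real (pi^3 * ((4 * c^3 - 3 * c) / (s * (4 * c^2 - 1))^3))"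
  proof -
    have "hz (3/7) 3 - hz (1 - 3/7) 3 = complex_of_real (pi^3 * cos (pi * (3/7)) / sin (pi * (3/7))^3)"
      by (rule hz3_diff) auto
    moreover have n: "(1 - 3/7 :: real) = 4/7" by simp
    moreover have e: "pi * (3/7) = 3 * t" by (simp add: t_def)
    ultimately show ?thesis unfolding times_divide_eq_right by (simp only: s3t c3t)
  qed
  have p: "8*c^3 - 4*c^2 - 4*c + 1 = 0"
  proof -
    have "cos (4 * t) = cos (pi - 3 * t)" by (simp add: t_def)
    hence "cos (2 * (2 * t)) = - cos (3 * t)" by (simp add: cos_pi_minus)
    hence "2 * (2 * c^2 - 1)^2 - 1 = - (4 * c^3 - 3 * c)"
      unfolding cos_double_cos c3t c_def[symmetric] .
    hence "(c + 1) * (8*c^3 - 4*c^2 - 4*c + 1) = 0"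
      by (simp add: algebra_simps power2_eq_square power3_eq_cube)
    moreover have "c + 1 \<noteq> 0"
    proof -
      have "c > -1" unfolding c_def using cos_monotone_0_pi[of t pi] t by simp
      thus ?thesis by simp
    qed
    ultimately show ?thesis by simp
  qed
  have c: "c > 1/2"
  proof -
    have "cos (pi / 3) < cos t" using t by (intro cos_monotone_0_pi) (auto simp: t_def)
    thus ?thesis by (simp add: c_def cos_60)
  qed
  have s: "s > 0" unfolding s_def using t by (rule sin_gt_zero)
  have s2: "s^2 = 1 - c^2" by (simp add: s_def c_def sin_squared_eq)
  have sq7: "sqrt 7 = 4 * s * (2 * c - 1) * (c + 1)"
  proof (rule real_sqrt_unique)
    have "(4 * s * (2 * c - 1) * (c + 1))^2 = 16 * s^2 * (2*c-1)^2 * (c+1)^2"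
      by (simp add: power_mult_distrib)
    also have "\<dots> = 16 * (1 - c^2) * (2*c-1)^2 * (c+1)^2" by (simp add: s2)
    also have "\<dots> = 7 + (9 + 4*c - 12*c^2 - 8*c^3) * (8*c^3 - 4*c^2 - 4*c + 1)"
      by algebra
    also have "\<dots> = 7" by (simp add: p)
    finally show "(4 * s * (2 * c - 1) * (c + 1))^2 = 7" .
    show "0 \<le> 4 * s * (2 * c - 1) * (c + 1)" using s c by simp
  qed
  have alg: "c / s^3 + (2*c^2 - 1) / (2 * s * c)^3 - (4*c^3 - 3*c) / (s * (4*c^2 - 1))^3 = 32 / sqrt 7"
    unfolding sq7 by (rule trig7_alg[OF p s2 s c])
  have R: "pi^3 * (c / s^3) + pi^3 * ((2*c^2 - 1) / (2 * s * c)^3) - pi^3 * ((4*c^3 - 3*c) / (s * (4*c^2 - 1))^3)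
      = pi^3 * 32 / sqrt 7"
  proof -
    have "pi^3 * (c / s^3) + pi^3 * ((2*c^2 - 1) / (2 * s * c)^3) - pi^3 * ((4*c^3 - 3*c) / (s * (4*c^2 - 1))^3)
        = pi^3 * (c / s^3 + (2*c^2 - 1) / (2 * s * c)^3 - (4*c^3 - 3*c) / (s * (4*c^2 - 1))^3)"
      by (simp only: distrib_left right_diff_distrib)
    also have "\<dots> = pi^3 * (32 / sqrt 7)" by (simp only: alg)
    finally show ?thesis by simp
  qed
  show ?thesis
    unfolding d1 d2 d3 by (simp only: of_real_add[symmetric] of_real_diff[symmetric] R)
qed

lemma final7: "pi^3 = 343 / (32 * 7 powr (5/2)) * (pi^3 * 32 / sqrt 7)"
proof -
  have "7 powr (5/2::real) = 7 powr (2 + 1/2)" by simp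
  also have "\<dots> = 49 * sqrt 7" by (subst powr_add) (simp add: powr_half_sqrt)
  finally have p: "7 powr (5/2::real) = 49 * sqrt 7" .
  have s7: "sqrt 7 * sqrt (7::real) = 7" by simp
  show ?thesis unfolding p by (simp add: field_simps s7)
qed

theorem corollary1:
  shows "\<exists>S1 S2.
    (\<lambda>n. (-1) ^ n / fact n * 2 ^ n * (stieltjes n (1/3) - stieltjes n (2/3))) sums S1 \<and>
    (\<lambda>n. (-1) ^ n / fact n * 2 ^ n *
        (stieltjes n (1/7) + stieltjes n (2/7) - stieltjes n (3/7)
         + stieltjes n (4/7) - stieltjes n (5/7) - stieltjes n (6/7))) sums S2 \<and>
    complex_of_real (pi ^ 3) = complex_of_real (81 / (4 * 3 powr (5/2))) * S1 \<and>
    complex_of_real (pi ^ 3) = complex_of_real (343 / (32 * 7 powr (5/2))) * S2"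
proof -
  define T where "T = (\<lambda>a n. (-1) ^ n / fact n * 2 ^ n * stieltjes n a)"
  have TS: "T a sums (hz a 3 - 1/2)" if "a > 0" for a
    unfolding T_def by (rule stieltjes_sums[OF that])
  have s1: "(\<lambda>n. (-1) ^ n / fact n * 2 ^ n * (stieltjes n (1/3) - stieltjes n (2/3))) sums
              (hz (1/3) 3 - hz (2/3) 3)"
  proof -
    have "(\<lambda>n. T (1/3) n - T (2/3) n) sums ((hz (1/3) 3 - 1/2) - (hz (2/3) 3 - 1/2))"
      by (intro sums_diff TS) auto
    moreover have "(\<lambda>n. T (1/3) n - T (2/3) n) =
        (\<lambda>n. (-1) ^ n / fact n * 2 ^ n * (stieltjes n (1/3) - stieltjes n (2/3)))"
      by (rule ext) (simp add: T_def right_diff_distrib)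
    ultimately show ?thesis by simp
  qed
  define V where "V = (hz (1/7) 3 - hz (6/7) 3) + (hz (2/7) 3 - hz (5/7) 3) - (hz (3/7) 3 - hz (4/7) 3)"
  have s2: "(\<lambda>n. (-1) ^ n / fact n * 2 ^ n *
        (stieltjes n (1/7) + stieltjes n (2/7) - stieltjes n (3/7)
         + stieltjes n (4/7) - stieltjes n (5/7) - stieltjes n (6/7))) sums V"
  proof -
    have "(\<lambda>n. T (1/7) n + T (2/7) n - T (3/7) n + T (4/7) n - T (5/7) n - T (6/7) n) sums
       ((hz (1/7) 3 - 1/2) + (hz (2/7) 3 - 1/2) - (hz (3/7) 3 - 1/2) + (hz (4/7) 3 - 1/2)
          - (hz (5/7) 3 - 1/2) - (hz (6/7) 3 - 1/2))"
      by (intro sums_diff sums_add TS) auto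
    moreover have "(\<lambda>n. T (1/7) n + T (2/7) n - T (3/7) n + T (4/7) n - T (5/7) n - T (6/7) n) =
        (\<lambda>n. (-1) ^ n / fact n * 2 ^ n *
        (stieltjes n (1/7) + stieltjes n (2/7) - stieltjes n (3/7)
         + stieltjes n (4/7) - stieltjes n (5/7) - stieltjes n (6/7)))"
      by (rule ext) (simp add: T_def algebra_simps)
    moreover have "(hz (1/7) 3 - 1/2) + (hz (2/7) 3 - 1/2) - (hz (3/7) 3 - 1/2) + (hz (4/7) 3 - 1/2)
          - (hz (5/7) 3 - 1/2) - (hz (6/7) 3 - 1/2) = V"
      by (simp add: V_def algebra_simps)
    ultimately show ?thesis by simp
  qed
  have e1: "complex_of_real (pi ^ 3) = complex_of_real (81 / (4 * 3 powr (5/2))) * (hz (1/3) 3 - hz (2/3) 3)"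
    unfolding value3 of_real_mult[symmetric] using final3 by simp
  have e2: "complex_of_real (pi ^ 3) = complex_of_real (343 / (32 * 7 powr (5/2))) * V"
    unfolding V_def value7 of_real_mult[symmetric] using final7 by simp
  show ?thesis using s1 s2 e1 e2 by blast
qed

end
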